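(* Let $g:\mathbb B^3\to\mathbb B$ be the Boolean function induced by the formula $v_1\wedge v_2\wedge v_3$, i.e. $g(b_1,b_2,b_3)=T$ iff $b_1=b_2=b_3=T$. There is no instruction sequence $X\in\mathrm{IS}^{na}_{br}$ such that: no jump instruction occurs in $X$, the termination instruction $!$ occurs at most once in $X$, the basic instruction $\mathrm{out}.\mathrm{set}{:}F$ does not occur in $X$ (in any plain, positive test or negative test instruction), and $X$ computes $g$.
   Context: $\mathbb B=\{T,F\}$. A primitive instruction is one of: a plain basic instruction $a$, a positive test instruction $+a$, a negative test instruction $-a$ (for a basic instruction $a$), a forward jump instruction $\#l$ ($l\in\mathbb N$), or the termination instruction $!$. An instruction sequence is a finite nonempty sequence $X=u_1;\dots;u_k$ of primitive instructions; its length is $|X|=k$. Basic instructions have the form $f.m$ where the focus $f$ is one of $\mathrm{in}{:}i$, $\mathrm{aux}{:}i$ ($i\ge 1$) or $\mathrm{out}$, each naming a Boolean register, and the method $m$ is one of $\mathrm{set}{:}T$, $\mathrm{set}{:}F$, $\mathrm{get}$. Executing $f.\mathrm{set}{:}b$ sets register $f$ to $b$ and yields reply $b$; executing $f.\mathrm{get}$ leaves the register unchanged and yields its content as reply. Execution of $X=u_1;\dots;u_k$: a counter starts at $1$. If the counter exceeds $k$, execution deadlocks. At position $i$: if $u_i=!$, execution terminates; if $u_i=\#l$, execution deadlocks if $l=0$ and otherwise the counter becomes $i+l$; if $u_i$ is $a$, $+a$ or $-a$, the basic instruction $a$ is executed yielding reply $r$, and the counter becomes $i+1$ for $u_i=a$;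 for $u_i=+a$ it becomes $i+1$ if $r=T$ and $i+2$ if $r=F$; for $u_i=-a$ it becomes $i+1$ if $r=F$ and $i+2$ if $r=T$. $\mathrm{IS}_{br}$ is the set of instruction sequences in which every basic instruction occurring belongs to $\{f.\mathrm{get}: f=\mathrm{in}{:}i \text{ or } f=\mathrm{aux}{:}i\}\cup\{f.\mathrm{set}{:}b: f=\mathrm{aux}{:}i \text{ or } f=\mathrm{out},\ b\in\mathbb B\}$. $\mathrm{IS}^{na}_{br}\subseteq \mathrm{IS}_{br}$ is the set of those in which every basic instruction belongs to $\{\mathrm{in}{:}i.\mathrm{get}: i\ge1\}\cup\{\mathrm{out}.\mathrm{set}{:}T,\mathrm{out}.\mathrm{set}{:}F\}$. $X\in\mathrm{IS}_{br}$ computes $f:\mathbb B^n\to\mathbb B$ if for every $(b_1,\dots,b_n)\in\mathbb B^n$: when $X$ is executed with register $\mathrm{in}{:}j$ initialised to $b_j$ ($j\le n$) and all registers $\mathrm{aux}{:}i$ and $\mathrm{out}$ initialised to $F$, execution terminates (does not deadlock) without ever executing a basic instruction with focus $\mathrm{in}{:}j$ for $j>n$, and at termination register $\mathrm{out}$ contains $f(b_1,\dots,b_n)$. *)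

theory Defs
  imports Main
begin

datatype focus = In nat | Aux nat | Out

datatype meth = Set bool | Get

type_synonym basic = "focus \<times> meth"

datatype prim =
    Plain basic
  | PosT basic
  | NegT basic
  | Jump nat
  | Term

type_synonym iseq = "prim list"

type_synonym regs = "focus \<Rightarrow> bool"

fun exec_basic :: "basic \<Rightarrow> regs \<Rightarrow> regs \<times> bool" where
  "exec_basic (f, Set b) s = (s(f := b), b)"
| "exec_basic (f, Get) s = (s, s f)"

fun allowed :: "nat \<Rightarrow> basic \<Rightarrow> bool" where
  "allowed n (In j, m) = (j \<le> n)"
| "allowed n (_, m) = True"

text \<open>runs n X pc s s': execution of X started at (1-based) counter pc in
  register state s terminates (reaches a ! instruction) in state s', without
  deadlock and without executing a basic instruction with focus in:j, j > n.
  Execution is deterministic, so this characterises the unique run.\<close>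
inductive runs :: "nat \<Rightarrow> iseq \<Rightarrow> nat \<Rightarrow> regs \<Rightarrow> regs \<Rightarrow> bool"
  for n :: nat and X :: iseq where
  run_term: "\<lbrakk>1 \<le> pc; pc \<le> length X; X ! (pc - 1) = Term\<rbrakk> \<Longrightarrow> runs n X pc s s"
| run_jump: "\<lbrakk>1 \<le> pc; pc \<le> length X; X ! (pc - 1) = Jump l; l > 0;
              runs n X (pc + l) s s'\<rbrakk> \<Longrightarrow> runs n X pc s s'"
| run_plain: "\<lbrakk>1 \<le> pc; pc \<le> length X; X ! (pc - 1) = Plain a; allowed n a;
              exec_basic a s = (t, r); runs n X (pc + 1) t s'\<rbrakk> \<Longrightarrow> runs n X pc s s'"
| run_pos: "\<lbrakk>1 \<le> pc; pc \<le> length X; X ! (pc - 1) = PosT a; allowed n a;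
              exec_basic a s = (t, r); runs n X (if r then pc + 1 else pc + 2) t s'\<rbrakk>
              \<Longrightarrow> runs n X pc s s'"
| run_neg: "\<lbrakk>1 \<le> pc; pc \<le> length X; X ! (pc - 1) = NegT a; allowed n a;
              exec_basic a s = (t, r); runs n X (if r then pc + 2 else pc + 1) t s'\<rbrakk>
              \<Longrightarrow> runs n X pc s s'"

fun basics_of :: "prim \<Rightarrow> basic set" where
  "basics_of (Plain a) = {a}"
| "basics_of (PosT a) = {a}"
| "basics_of (NegT a) = {a}"
| "basics_of (Jump l) = {}"
| "basics_of Term = {}"

definition basics :: "iseq \<Rightarrow> basic set" where
  "basics X = (\<Union>u\<in>set X. basics_of u)"

definition IS_br :: "iseq set" where
  "IS_br = {X. X \<noteq> [] \<and> basics X \<subseteq>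
      {(f, Get) | f i. i \<ge> 1 \<and> (f = In i \<or> f = Aux i)}
      \<union> {(f, Set b) | f i b. (i \<ge> 1 \<and> f = Aux i) \<or> f = Out}}"

definition IS_na_br :: "iseq set" where
  "IS_na_br = {X. X \<in> IS_br \<and> basics X \<subseteq>
      {(In i, Get) | i. i \<ge> 1} \<union> {(Out, Set True), (Out, Set False)}}"

text \<open>Initial register state for input (b_1,...,b_n), given as a list of length n.
  Registers in:j with j > n are never accessed in a successful run, so their
  value is irrelevant; we set them to F.\<close>
definition init_regs :: "bool list \<Rightarrow> regs" where
  "init_regs bs = (\<lambda>f. case f of In j \<Rightarrow> (1 \<le> j \<and> j \<le> length bs \<and> bs ! (j - 1)) | _ \<Rightarrow> False)"

definition computes :: "nat \<Rightarrow> iseq \<Rightarrow> (bool list \<Rightarrow> bool) \<Rightarrow> bool" where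
  "computes n X f \<longleftrightarrow> X \<in> IS_br \<and>
     (\<forall>bs. length bs = n \<longrightarrow> (\<exists>s'. runs n X 1 (init_regs bs) s' \<and> s' Out = f bs))"

definition is_jump :: "prim \<Rightarrow> bool" where
  "is_jump u \<longleftrightarrow> (\<exists>l. u = Jump l)"

definition g3 :: "bool list \<Rightarrow> bool" where
  "g3 bs \<longleftrightarrow> bs ! 0 \<and> bs ! 1 \<and> bs ! 2"

end

theory Submission
  imports Defs
begin

fun nxt :: "prim \<Rightarrow> regs \<Rightarrow> nat \<Rightarrow> nat" where
  "nxt (Plain a) s k = k + 1"
| "nxt (PosT a) s k = (if snd (exec_basic a s) then k + 1 else k + 2)"
| "nxt (NegT a) s k = (if snd (exec_basic a s) then k + 2 else k + 1)"
| "nxt (Jump l) s k = k + l"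
| "nxt Term s k = k"

inductive reach :: "iseq \<Rightarrow> regs \<Rightarrow> nat \<Rightarrow> nat \<Rightarrow> bool" for X s where
  rrefl: "reach X s k k"
| rstep: "\<lbrakk>1 \<le> k; k \<le> length X; X ! (k - 1) \<noteq> Term;
           reach X s (nxt (X ! (k - 1)) s k) j\<rbrakk> \<Longrightarrow> reach X s k j"

definition okb :: "basic \<Rightarrow> bool" where
  "okb a \<longleftrightarrow> a = (Out, Set True) \<or> (\<exists>i. i \<ge> 1 \<and> a = (In i, Get))"

definition okp :: "prim \<Rightarrow> bool" where
  "okp u \<longleftrightarrow> u = Term \<or> (\<exists>a. (u = Plain a \<or> u = PosT a \<or> u = NegT a) \<and> okb a)"

definition isout :: "prim \<Rightarrow> bool" where
  "isout u \<longleftrightarrow> (Out, Set True) \<in> basics_of u"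

lemma reach_Term: "reach X s k j \<Longrightarrow> X ! (k - 1) = Term \<Longrightarrow> j = k"
  by (induction rule: reach.induct) auto

lemma reach_trans: "reach X s a b \<Longrightarrow> reach X s b c \<Longrightarrow> reach X s a c"
  by (induction rule: reach.induct) (auto intro: rstep)

lemma reach_back: "reach X s a j \<Longrightarrow> j \<noteq> a \<Longrightarrow>
   \<exists>k. reach X s a k \<and> 1 \<le> k \<and> k \<le> length X \<and> X ! (k - 1) \<noteq> Term \<and> nxt (X ! (k - 1)) s k = j"
proof (induction rule: reach.induct)
  case (rrefl k) then show ?case by simp
next
  case (rstep k j)
  show ?case
  proof (cases "j = nxt (X ! (k - 1)) s k")
    case True then show ?thesis using rstep by (auto intro: reach.rrefl)
  next
    case False
    then obtain k' where "reach X s (nxt (X ! (k - 1)) s k) k'" "1 \<le> k'" "k' \<le> length X"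
      "X ! (k' - 1) \<noteq> Term" "nxt (X ! (k' - 1)) s k' = j" using rstep by blast
    then show ?thesis using rstep(1-3) by (blast intro: reach.rstep)
  qed
qed

lemma nxt_range: "okp u \<Longrightarrow> u \<noteq> Term \<Longrightarrow> nxt u s k = k + 1 \<or> nxt u s k = k + 2"
  unfolding okp_def by (auto split: if_splits)

lemma exec_ok:
  assumes "okb a" "exec_basic a s = (t, r)" "\<forall>i. s (In i) = s0 (In i)"
  shows "(\<forall>i. t (In i) = s0 (In i)) \<and> r = snd (exec_basic a s0)
     \<and> (t Out \<longleftrightarrow> s Out \<or> a = (Out, Set True))"
proof -
  from assms(1) consider "a = (Out, Set True)" | i where "a = (In i, Get)"
    unfolding okb_def by blast
  then show ?thesis
  proof cases
    case 1
    have "t = s(Out := True)" "r = True" using assms(2) 1 by auto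
    then show ?thesis using assms(3) 1 by simp
  next
    case (2 i)
    have "t = s" "r = s (In i)" using assms(2) 2 by auto
    then show ?thesis using assms(3) 2 by simp
  qed
qed


lemma runs_reach:
  assumes "runs n X pc s s'" "\<forall>u\<in>set X. okp u" "\<forall>i. s (In i) = s0 (In i)"
  shows "\<exists>t. 1 \<le> t \<and> t \<le> length X \<and> X ! (t - 1) = Term \<and> reach X s0 pc t \<and>
    (\<forall>k. reach X s0 pc k \<longrightarrow> pc \<le> k \<and> k \<le> t \<and> (k < t \<longrightarrow> (\<forall>a\<in>basics_of (X ! (k - 1)). allowed n a))) \<and>
    (s' Out \<longleftrightarrow> s Out \<or> (\<exists>k. reach X s0 pc k \<and> k < t \<and> isout (X ! (k - 1))))"
  using assms
proof (induction rule: runs.induct)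
  case (run_term pc s)
  have K: "reach X s0 pc k \<Longrightarrow> k = pc" for k using reach_Term run_term(3) by blast
  show ?case
    apply (rule exI[of _ pc])
    using run_term(1-3) K reach.rrefl[of X s0 pc] by (intro conjI; force)
next
  case (run_jump pc l s s')
  have "X ! (pc - 1) \<in> set X" using run_jump(1,2) by simp
  then have "okp (Jump l)" using run_jump(3,7) by simp
  then show ?case by (simp add: okp_def)
next
  case (run_plain pc a s t r s')
  have u: "X ! (pc - 1) \<in> set X" using run_plain(1,2) by simp
  then have oa: "okb a" using run_plain(3,8) unfolding okp_def by auto
  note e = exec_ok[OF oa run_plain(5) run_plain(9)]
  from run_plain(7)[OF run_plain(8) conjunct1[OF e]] obtain T where
    T: "1 \<le> T" "T \<le> length X" "X ! (T - 1) = Term" "reach X s0 (pc + 1) T"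
    "\<forall>k. reach X s0 (pc+1) k \<longrightarrow> pc + 1 \<le> k \<and> k \<le> T \<and> (k < T \<longrightarrow> (\<forall>a\<in>basics_of (X ! (k - 1)). allowed n a))"
    "(s' Out \<longleftrightarrow> t Out \<or> (\<exists>k. reach X s0 (pc+1) k \<and> k < T \<and> isout (X ! (k - 1))))" by blast
  have R: "reach X s0 pc k \<longleftrightarrow> k = pc \<or> reach X s0 (pc+1) k" for k
    using run_plain(1-3) by (auto elim: reach.cases intro: reach.intros)
  have A1: "reach X s0 pc T" using R T(4) by blast
  have A2: "\<forall>k. reach X s0 pc k \<longrightarrow> pc \<le> k \<and> k \<le> T \<and> (k < T \<longrightarrow> (\<forall>a\<in>basics_of (X ! (k - 1)). allowed n a))"
  proof (intro allI impI)
    fix k assume "reach X s0 pc k"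
    then consider "k = pc" | "reach X s0 (pc+1) k" using R by blast
    then show "pc \<le> k \<and> k \<le> T \<and> (k < T \<longrightarrow> (\<forall>a\<in>basics_of (X ! (k - 1)). allowed n a))"
    proof cases
      case 1
      have "pc + 1 \<le> T" using T(4,5) by blast
      then show ?thesis using 1 run_plain(3,4) by simp
    next
      case 2 then show ?thesis using T(5) by fastforce
    qed
  qed
  have io: "isout (X ! (pc - 1)) \<longleftrightarrow> a = (Out, Set True)" using run_plain(3) by (auto simp: isout_def)
  then have A3: "s' Out \<longleftrightarrow> s Out \<or> (\<exists>k. reach X s0 pc k \<and> k < T \<and> isout (X ! (k - 1)))"
  proof -
    have pT: "pc < T" using T(4,5) by fastforce
    have "(\<exists>k. reach X s0 pc k \<and> k < T \<and> isout (X ! (k - 1))) \<longleftrightarrow> isout (X ! (pc - 1)) \<or> (\<exists>k. reach X s0 (pc+1) k \<and> k < T \<and> isout (X ! (k - 1)))"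
      unfolding R using pT by auto
    then show ?thesis using T(6) e io by blast
  qed
  show ?case using T(1-3) A1 A2 A3 by blast
next
  case (run_pos pc a s t r s')
  have u: "X ! (pc - 1) \<in> set X" using run_pos(1,2) by simp
  then have oa: "okb a" using run_pos(3,8) unfolding okp_def by auto
  note e = exec_ok[OF oa run_pos(5) run_pos(9)]
  define q where "q = (if r then pc + 1 else pc + 2)"
  from run_pos(7)[OF run_pos(8) conjunct1[OF e]] obtain T where
    T: "1 \<le> T" "T \<le> length X" "X ! (T - 1) = Term" "reach X s0 q T"
    "\<forall>k. reach X s0 q k \<longrightarrow> q \<le> k \<and> k \<le> T \<and> (k < T \<longrightarrow> (\<forall>a\<in>basics_of (X ! (k - 1)). allowed n a))"
    "(s' Out \<longleftrightarrow> t Out \<or> (\<exists>k. reach X s0 q k \<and> k < T \<and> isout (X ! (k - 1))))"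
    unfolding q_def by blast
  have nq: "nxt (X ! (pc - 1)) s0 pc = q" using run_pos(3) e unfolding q_def by simp
  have R: "reach X s0 pc k \<longleftrightarrow> k = pc \<or> reach X s0 q k" for k
  proof
    assume "reach X s0 pc k" then show "k = pc \<or> reach X s0 q k"
      by (cases rule: reach.cases) (use nq in auto)
  next
    assume "k = pc \<or> reach X s0 q k" then show "reach X s0 pc k"
      using reach.rstep[of pc X s0 k] run_pos(1-3) nq reach.rrefl by auto
  qed
  have "pc < q" unfolding q_def by simp
  have A1: "reach X s0 pc T" using R T(4) by blast
  have A2: "\<forall>k. reach X s0 pc k \<longrightarrow> pc \<le> k \<and> k \<le> T \<and> (k < T \<longrightarrow> (\<forall>a\<in>basics_of (X ! (k - 1)). allowed n a))"
  proof (intro allI impI)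
    fix k assume "reach X s0 pc k"
    then consider "k = pc" | "reach X s0 q k" using R by blast
    then show "pc \<le> k \<and> k \<le> T \<and> (k < T \<longrightarrow> (\<forall>a\<in>basics_of (X ! (k - 1)). allowed n a))"
    proof cases
      case 1
      have "q \<le> T" using T(4,5) by blast
      then show ?thesis using 1 run_pos(3,4) \<open>pc < q\<close> by simp
    next
      case 2 then show ?thesis using T(5) \<open>pc < q\<close> by fastforce
    qed
  qed
  have io: "isout (X ! (pc - 1)) \<longleftrightarrow> a = (Out, Set True)" using run_pos(3) by (auto simp: isout_def)
  then have A3: "s' Out \<longleftrightarrow> s Out \<or> (\<exists>k. reach X s0 pc k \<and> k < T \<and> isout (X ! (k - 1)))"
  proof -
    have pT: "pc < T" using T(4,5) \<open>pc < q\<close> by fastforce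
    have "(\<exists>k. reach X s0 pc k \<and> k < T \<and> isout (X ! (k - 1))) \<longleftrightarrow> isout (X ! (pc - 1)) \<or> (\<exists>k. reach X s0 q k \<and> k < T \<and> isout (X ! (k - 1)))"
      unfolding R using pT by auto
    then show ?thesis using T(6) e io by blast
  qed
  show ?case using T(1-3) A1 A2 A3 by blast
next
  case (run_neg pc a s t r s')
  have u: "X ! (pc - 1) \<in> set X" using run_neg(1,2) by simp
  then have oa: "okb a" using run_neg(3,8) unfolding okp_def by auto
  note e = exec_ok[OF oa run_neg(5) run_neg(9)]
  define q where "q = (if r then pc + 2 else pc + 1)"
  from run_neg(7)[OF run_neg(8) conjunct1[OF e]] obtain T where
    T: "1 \<le> T" "T \<le> length X" "X ! (T - 1) = Term" "reach X s0 q T"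
    "\<forall>k. reach X s0 q k \<longrightarrow> q \<le> k \<and> k \<le> T \<and> (k < T \<longrightarrow> (\<forall>a\<in>basics_of (X ! (k - 1)). allowed n a))"
    "(s' Out \<longleftrightarrow> t Out \<or> (\<exists>k. reach X s0 q k \<and> k < T \<and> isout (X ! (k - 1))))"
    unfolding q_def by blast
  have nq: "nxt (X ! (pc - 1)) s0 pc = q" using run_neg(3) e unfolding q_def by simp
  have R: "reach X s0 pc k \<longleftrightarrow> k = pc \<or> reach X s0 q k" for k
  proof
    assume "reach X s0 pc k" then show "k = pc \<or> reach X s0 q k"
      by (cases rule: reach.cases) (use nq in auto)
  next
    assume "k = pc \<or> reach X s0 q k" then show "reach X s0 pc k"
      using reach.rstep[of pc X s0 k] run_neg(1-3) nq reach.rrefl by auto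
  qed
  have "pc < q" unfolding q_def by simp
  have A1: "reach X s0 pc T" using R T(4) by blast
  have A2: "\<forall>k. reach X s0 pc k \<longrightarrow> pc \<le> k \<and> k \<le> T \<and> (k < T \<longrightarrow> (\<forall>a\<in>basics_of (X ! (k - 1)). allowed n a))"
  proof (intro allI impI)
    fix k assume "reach X s0 pc k"
    then consider "k = pc" | "reach X s0 q k" using R by blast
    then show "pc \<le> k \<and> k \<le> T \<and> (k < T \<longrightarrow> (\<forall>a\<in>basics_of (X ! (k - 1)). allowed n a))"
    proof cases
      case 1
      have "q \<le> T" using T(4,5) by blast
      then show ?thesis using 1 run_neg(3,4) \<open>pc < q\<close> by simp
    next
      case 2 then show ?thesis using T(5) \<open>pc < q\<close> by fastforce
    qed
  qed
  have io: "isout (X ! (pc - 1)) \<longleftrightarrow> a = (Out, Set True)" using run_neg(3) by (auto simp: isout_def)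
  then have A3: "s' Out \<longleftrightarrow> s Out \<or> (\<exists>k. reach X s0 pc k \<and> k < T \<and> isout (X ! (k - 1)))"
  proof -
    have pT: "pc < T" using T(4,5) \<open>pc < q\<close> by fastforce
    have "(\<exists>k. reach X s0 pc k \<and> k < T \<and> isout (X ! (k - 1))) \<longleftrightarrow> isout (X ! (pc - 1)) \<or> (\<exists>k. reach X s0 q k \<and> k < T \<and> isout (X ! (k - 1)))"
      unfolding R using pT by auto
    then show ?thesis using T(6) e io by blast
  qed
  show ?case using T(1-3) A1 A2 A3 by blast
qed


lemma info:
  assumes okX: "\<forall>u\<in>set X. okp u"
    and comp: "\<exists>s'. runs 3 X 1 (init_regs x) s' \<and> s' Out = g3 x"
  shows "\<exists>t. 1 \<le> t \<and> t \<le> length X \<and> X ! (t - 1) = Term \<and> reach X (init_regs x) 1 t \<and>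
    (\<forall>k. reach X (init_regs x) 1 k \<longrightarrow> 1 \<le> k \<and> k \<le> t \<and> (k < t \<longrightarrow> (\<forall>a\<in>basics_of (X ! (k - 1)). allowed 3 a))) \<and>
    (g3 x \<longleftrightarrow> (\<exists>k. reach X (init_regs x) 1 k \<and> k < t \<and> isout (X ! (k - 1))))"
proof -
  obtain s' where r: "runs 3 X 1 (init_regs x) s'" and o: "s' Out = g3 x" using comp by blast
  have io: "init_regs x Out = False" by (simp add: init_regs_def)
  show ?thesis using runs_reach[OF r okX, of "init_regs x"] o io by simp
qed

lemma cross:
  assumes okX: "\<forall>u\<in>set X. okp u"
    and tl: "t \<le> length X"
    and nt: "\<And>k. 1 \<le> k \<Longrightarrow> k < t \<Longrightarrow> X ! (k - 1) \<noteq> Term"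
  shows "1 \<le> m \<Longrightarrow> m + 1 \<le> t \<Longrightarrow> reach X s 1 m \<or> reach X s 1 (m + 1)"
proof (induction m)
  case 0 then show ?case by simp
next
  case (Suc m)
  show ?case
  proof (cases "m = 0")
    case True then show ?thesis by (simp add: reach.rrefl)
  next
    case False
    then have "reach X s 1 m \<or> reach X s 1 (m + 1)" using Suc by simp
    moreover
    have "reach X s 1 (Suc m) \<or> reach X s 1 (Suc m + 1)" if "reach X s 1 m"
    proof -
      have "X ! (m - 1) \<in> set X" using False Suc.prems tl by simp
      then have ok: "okp (X ! (m - 1))" using okX by blast
      have ntm: "X ! (m - 1) \<noteq> Term" using nt[of m] False Suc.prems by simp
      have "reach X s m (nxt (X ! (m - 1)) s m)"
        using reach.rstep[of m X s "nxt (X ! (m - 1)) s m"] reach.rrefl False Suc.prems tl ntm by simp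
      then have "reach X s 1 (nxt (X ! (m - 1)) s m)" using reach_trans that by blast
      then show ?thesis using nxt_range[OF ok ntm, of s m] by auto
    qed
    ultimately show ?thesis by auto
  qed
qed

lemma main:
  assumes okX: "\<forall>u\<in>set X. okp u"
    and uniq: "\<And>i j. i < length X \<Longrightarrow> j < length X \<Longrightarrow> X ! i = Term \<Longrightarrow> X ! j = Term \<Longrightarrow> i = j"
    and comp: "\<And>bs. length bs = 3 \<Longrightarrow> \<exists>s'. runs 3 X 1 (init_regs bs) s' \<and> s' Out = g3 bs"
  shows False
proof -
  define E where "E = {[False,True,True],[True,False,True],[True,True,False]}"
  obtain t where t1: "1 \<le> t" and tl: "t \<le> length X" and tT: "X ! (t - 1) = Term"
    and gA: "\<exists>k. reach X (init_regs [True,True,True]) 1 k \<and> k < t \<and> isout (X ! (k - 1))"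
    and aK: "\<forall>k. reach X (init_regs [True,True,True]) 1 k \<longrightarrow> 1 \<le> k"
    using info[OF okX comp[of "[True,True,True]"]] by (auto simp: g3_def)
  have nt: "X ! (k - 1) \<noteq> Term" if "1 \<le> k" "k < t" for k
    using uniq[of "k - 1" "t - 1"] that t1 tl tT by fastforce
  have eI: "(\<forall>k. reach X (init_regs e) 1 k \<longrightarrow> 1 \<le> k \<and> k \<le> t \<and> (k < t \<longrightarrow> (\<forall>a\<in>basics_of (X ! (k - 1)). allowed 3 a))) \<and>
     (\<forall>k. reach X (init_regs e) 1 k \<longrightarrow> k < t \<longrightarrow> \<not> isout (X ! (k - 1)))" if "e \<in> E" for e
  proof -
    have l: "length e = 3" "\<not> g3 e" using that unfolding E_def g3_def by auto
    obtain t' where t': "1 \<le> t'" "t' \<le> length X" "X ! (t' - 1) = Term"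
      "(\<forall>k. reach X (init_regs e) 1 k \<longrightarrow> 1 \<le> k \<and> k \<le> t' \<and> (k < t' \<longrightarrow> (\<forall>a\<in>basics_of (X ! (k - 1)). allowed 3 a)))"
      "(g3 e \<longleftrightarrow> (\<exists>k. reach X (init_regs e) 1 k \<and> k < t' \<and> isout (X ! (k - 1))))"
      using info[OF okX comp[OF l(1)]] by blast
    have "t' = t" using uniq[of "t' - 1" "t - 1"] t' t1 tl tT by fastforce
    then show ?thesis using t' l(2) by blast
  qed
  obtain p where pA: "reach X (init_regs [True,True,True]) 1 p" "p < t" "isout (X ! (p - 1))"
    using gA by blast
  have p1: "1 \<le> p" using pA(1) aK by blast
  have "\<exists>e\<in>E. reach X (init_regs e) 1 p"
  proof (cases "p = 1")
    case True then show ?thesis unfolding E_def by (auto intro: reach.rrefl)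
  next
    case False
    define c where "c = p - 1"
    have c1: "1 \<le> c" "c + 1 = p" using False p1 unfolding c_def by auto
    show ?thesis
    proof (cases "\<exists>e\<in>E. \<not> reach X (init_regs e) 1 c")
      case True
      then obtain e where e: "e \<in> E" "\<not> reach X (init_regs e) 1 c" by blast
      have "reach X (init_regs e) 1 c \<or> reach X (init_regs e) 1 (c + 1)"
        using cross[OF okX tl nt, of c "init_regs e"] c1 pA(2) by simp
      then show ?thesis using e c1 by auto
    next
      case False
      then have allc: "\<And>e. e \<in> E \<Longrightarrow> reach X (init_regs e) 1 c" by blast
      have ct: "c < t" using c1 pA(2) by simp
      define u where "u = X ! (c - 1)"
      have uin: "u \<in> set X" using c1 ct tl unfolding u_def by simp
      then have oku: "okp u" using okX by blast
      have ntu: "u \<noteq> Term" using nt[OF c1(1) ct] unfolding u_def .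
      have stp: "reach X (init_regs e) 1 (nxt u (init_regs e) c)" if "e \<in> E" for e
      proof -
        have "reach X (init_regs e) c (nxt u (init_regs e) c)"
          using reach.rstep[of c X "init_regs e" "nxt u (init_regs e) c"] reach.rrefl c1 ct tl ntu
          unfolding u_def by simp
        then show ?thesis using reach_trans allc[OF that] by blast
      qed
      have alw: "\<forall>a\<in>basics_of u. allowed 3 a"
        using eI[of "[False,True,True]"] allc[of "[False,True,True]"] ct unfolding E_def u_def by blast
      have noo: "\<not> isout u"
        using eI[of "[False,True,True]"] allc[of "[False,True,True]"] ct unfolding E_def u_def by blast
      have "\<exists>e\<in>E. nxt u (init_regs e) c = p"
      proof -
        obtain a where a: "u = Plain a \<or> u = PosT a \<or> u = NegT a" "okb a"
          using oku ntu unfolding okp_def by blast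
        from a(2) consider "a = (Out, Set True)" | i where "1 \<le> i" "a = (In i, Get)"
          unfolding okb_def by blast
        then show ?thesis
        proof cases
          case 1
          then show ?thesis using a(1) noo c1 unfolding isout_def E_def by auto
        next
          case (2 i)
          have i3: "i \<le> 3" using alw a(1) 2 by auto
          have "i = 1 \<or> i = 2 \<or> i = 3" using i3 2(1) by auto
          then show ?thesis using a(1) 2 c1 unfolding E_def
            by (auto simp: init_regs_def)
        qed
      qed
      then show ?thesis using stp by auto
    qed
  qed
  then obtain e where "e \<in> E" "reach X (init_regs e) 1 p" by blast
  then show False using eI[of e] pA by blast
qed


theorem theorem3:
  shows "\<not> (\<exists>X. X \<in> IS_na_br
              \<and> (\<forall>u\<in>set X. \<not> is_jump u)
              \<and> length (filter (\<lambda>u. u = Term) X) \<le> 1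
              \<and> (Out, Set False) \<notin> basics X
              \<and> computes 3 X g3)"
proof
  assume "\<exists>X. X \<in> IS_na_br
              \<and> (\<forall>u\<in>set X. \<not> is_jump u)
              \<and> length (filter (\<lambda>u. u = Term) X) \<le> 1
              \<and> (Out, Set False) \<notin> basics X
              \<and> computes 3 X g3"
  then obtain X where na: "X \<in> IS_na_br" and nj: "\<forall>u\<in>set X. \<not> is_jump u"
    and ft: "length (filter (\<lambda>u. u = Term) X) \<le> 1"
    and nf: "(Out, Set False) \<notin> basics X" and cp: "computes 3 X g3" by blast
  have bs: "basics X \<subseteq> {(In i, Get) | i. i \<ge> 1} \<union> {(Out, Set True), (Out, Set False)}"
    using na unfolding IS_na_br_def by blast
  have okX: "\<forall>u\<in>set X. okp u"
  proof
    fix u assume u: "u \<in> set X"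
    have sub: "basics_of u \<subseteq> basics X" using u unfolding basics_def by blast
    have okA: "okb a" if "a \<in> basics_of u" for a
      using that sub bs nf unfolding okb_def by blast
    show "okp u"
    proof (cases u)
      case (Jump l) then show ?thesis using nj u unfolding is_jump_def by blast
    qed (use okA in \<open>auto simp: okp_def\<close>)
  qed
  have uniq: "i = j" if "i < length X" "j < length X" "X ! i = Term" "X ! j = Term" for i j
  proof -
    have "card {i. i < length X \<and> X ! i = Term} \<le> Suc 0"
      using ft by (simp add: length_filter_conv_card)
    then show ?thesis using that by (subst (asm) card_le_Suc0_iff_eq) auto
  qed
  have comp: "\<exists>s'. runs 3 X 1 (init_regs bs) s' \<and> s' Out = g3 bs" if "length bs = 3" for bs
    using cp that unfolding computes_def by blast
  show False using main[OF okX uniq comp] by blast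
qed

end
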